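(* Fix $\theta$ with $\phi(\theta)<\beta$. If $\tau_1^d(\theta)<\tau_2^d(\theta)$ then $\tau^\star(\theta)\in(\tau_1^d(\theta),\tau_2^d(\theta))$; if $\tau_2^d(\theta)<\tau_1^d(\theta)$ then $\tau^\star(\theta)\in(\tau_2^d(\theta),\tau_1^d(\theta))$.
   Context: Setup. Let $Q\in\{0,1\}$ be a random variable with $\mathbb P(Q=1)=\pi\in(0,1)$, and let $(\Theta,\Gamma)$ be a real-valued random vector whose conditional joint density given $Q=1$ is $h_q$ and given $Q=0$ is $h_u$, both strictly positive on $\mathbb R^2$. Monotone likelihood ratio assumption: $l(\theta,\gamma)=h_q(\theta,\gamma)/h_u(\theta,\gamma)$ is continuous and strictly increasing in each of $\theta$ and $\gamma$, and for each $\theta$ the map $\gamma\mapsto l(\theta,\gamma)$ has infimum $0$ and supremum $+\infty$. Fix payoffs $x_q>0$, $x_u>0$. For $\tau\in(-x_u,x_q)$ let $A(\tau)=\mathbb 1\{l(\Theta,\Gamma)>\frac{(1-\pi)(x_u+\tau)}{\pi(x_q-\tau)}\}$, $s_1(\theta,\tau)=\mathbb E[Q\mid\Theta=\theta,A(\tau)=1]$, $s_2(\theta,\tau)=\mathbb E[A(\tau)\mid\Theta=\theta]$, $\phi(\theta)=\mathbb P(Q=1\mid\Theta=\theta)$. The equalizing prejudice $\tau^\star(\theta)$ is the unique $\tau\in(-x_u,x_q)$ with $s_1(\theta,\tau)=s_2(\theta,\tau)$. Fix a cutoff $c\in(-x_u,x_q)$ and let $\beta=(x_u+c)/(x_q+x_u)\in(0,1)$.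 The critical prejudice $\tau_k^d(\theta)$, $k=1,2$, is the unique $\tau\in(-x_u,x_q)$ with $s_k(\theta,\tau)=\beta$ (it exists for $k=1$ when $\phi(\theta)<\beta$, and always for $k=2$). *)

theory Defs
  imports "HOL-Analysis.Analysis"
begin

text \<open>Joint densities hq (given Q=1) and hu (given Q=0) of (Theta,Gamma) on R^2,
  written curried: h t g is the density at (Theta,Gamma) = (t,g).
  All conditional quantities given Theta = t are computed from the densities
  (Bayes' rule with the sections g \<mapsto> h t g).\<close>

definition lr :: "(real \<Rightarrow> real \<Rightarrow> real) \<Rightarrow> (real \<Rightarrow> real \<Rightarrow> real) \<Rightarrow> real \<Rightarrow> real \<Rightarrow> real" where
  "lr hq hu t g = hq t g / hu t g"

definition thr :: "real \<Rightarrow> real \<Rightarrow> real \<Rightarrow> real \<Rightarrow> real" where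
  "thr p xq xu \<tau> = ((1 - p) * (xu + \<tau>)) / (p * (xq - \<tau>))"

text \<open>Event A(tau) = 1, as a set of values of Gamma for fixed Theta = t.\<close>
definition acc_set :: "real \<Rightarrow> (real \<Rightarrow> real \<Rightarrow> real) \<Rightarrow> (real \<Rightarrow> real \<Rightarrow> real)
    \<Rightarrow> real \<Rightarrow> real \<Rightarrow> real \<Rightarrow> real \<Rightarrow> real set" where
  "acc_set p hq hu xq xu t \<tau> = {g. lr hq hu t g > thr p xq xu \<tau>}"

text \<open>phi(t) = P(Q = 1 | Theta = t).\<close>
definition phi :: "real \<Rightarrow> (real \<Rightarrow> real \<Rightarrow> real) \<Rightarrow> (real \<Rightarrow> real \<Rightarrow> real) \<Rightarrow> real \<Rightarrow> real" where
  "phi p hq hu t =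
     p * (LINT g|lborel. hq t g) /
     (p * (LINT g|lborel. hq t g) + (1 - p) * (LINT g|lborel. hu t g))"

text \<open>s1(t,tau) = E[Q | Theta = t, A(tau) = 1].\<close>
definition s1 :: "real \<Rightarrow> (real \<Rightarrow> real \<Rightarrow> real) \<Rightarrow> (real \<Rightarrow> real \<Rightarrow> real)
    \<Rightarrow> real \<Rightarrow> real \<Rightarrow> real \<Rightarrow> real \<Rightarrow> real" where
  "s1 p hq hu xq xu t \<tau> =
     (let A = acc_set p hq hu xq xu t \<tau> in
      p * (LINT g:A|lborel. hq t g) /
      (p * (LINT g:A|lborel. hq t g) + (1 - p) * (LINT g:A|lborel. hu t g)))"

text \<open>s2(t,tau) = E[A(tau) | Theta = t].\<close>
definition s2 :: "real \<Rightarrow> (real \<Rightarrow> real \<Rightarrow> real) \<Rightarrow> (real \<Rightarrow> real \<Rightarrow> real)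
    \<Rightarrow> real \<Rightarrow> real \<Rightarrow> real \<Rightarrow> real \<Rightarrow> real" where
  "s2 p hq hu xq xu t \<tau> =
     (let A = acc_set p hq hu xq xu t \<tau> in
      (p * (LINT g:A|lborel. hq t g) + (1 - p) * (LINT g:A|lborel. hu t g)) /
      (p * (LINT g|lborel. hq t g) + (1 - p) * (LINT g|lborel. hu t g)))"

definition tau_star :: "real \<Rightarrow> (real \<Rightarrow> real \<Rightarrow> real) \<Rightarrow> (real \<Rightarrow> real \<Rightarrow> real)
    \<Rightarrow> real \<Rightarrow> real \<Rightarrow> real \<Rightarrow> real" where
  "tau_star p hq hu xq xu t =
     (THE \<tau>. \<tau> \<in> {-xu<..<xq} \<and> s1 p hq hu xq xu t \<tau> = s2 p hq hu xq xu t \<tau>)"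

definition beta :: "real \<Rightarrow> real \<Rightarrow> real \<Rightarrow> real" where
  "beta xq xu c = (xu + c) / (xq + xu)"

definition tau_d1 :: "real \<Rightarrow> (real \<Rightarrow> real \<Rightarrow> real) \<Rightarrow> (real \<Rightarrow> real \<Rightarrow> real)
    \<Rightarrow> real \<Rightarrow> real \<Rightarrow> real \<Rightarrow> real \<Rightarrow> real" where
  "tau_d1 p hq hu xq xu c t =
     (THE \<tau>. \<tau> \<in> {-xu<..<xq} \<and> s1 p hq hu xq xu t \<tau> = beta xq xu c)"

definition tau_d2 :: "real \<Rightarrow> (real \<Rightarrow> real \<Rightarrow> real) \<Rightarrow> (real \<Rightarrow> real \<Rightarrow> real)
    \<Rightarrow> real \<Rightarrow> real \<Rightarrow> real \<Rightarrow> real \<Rightarrow> real" where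
  "tau_d2 p hq hu xq xu c t =
     (THE \<tau>. \<tau> \<in> {-xu<..<xq} \<and> s2 p hq hu xq xu t \<tau> = beta xq xu c)"

text \<open>Standing assumptions: pi in (0,1); hq, hu strictly positive probability densities
  on R^2 whose sections g \<mapsto> h t g are integrable (so conditioning on Theta = t makes sense);
  monotone likelihood ratio assumption; positive payoffs.\<close>
definition model :: "real \<Rightarrow> (real \<Rightarrow> real \<Rightarrow> real) \<Rightarrow> (real \<Rightarrow> real \<Rightarrow> real)
    \<Rightarrow> real \<Rightarrow> real \<Rightarrow> bool" where
  "model p hq hu xq xu \<longleftrightarrow>
     0 < p \<and> p < 1 \<and> 0 < xq \<and> 0 < xu \<and>
     (\<forall>t g. 0 < hq t g) \<and> (\<forall>t g. 0 < hu t g) \<and>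
     integrable (lborel :: (real \<times> real) measure) (\<lambda>(t, g). hq t g) \<and>
     integrable (lborel :: (real \<times> real) measure) (\<lambda>(t, g). hu t g) \<and>
     integral\<^sup>L (lborel :: (real \<times> real) measure) (\<lambda>(t, g). hq t g) = 1 \<and>
     integral\<^sup>L (lborel :: (real \<times> real) measure) (\<lambda>(t, g). hu t g) = 1 \<and>
     (\<forall>t. integrable lborel (hq t)) \<and> (\<forall>t. integrable lborel (hu t)) \<and>
     continuous_on UNIV (\<lambda>(t, g). lr hq hu t g) \<and>
     (\<forall>g. strict_mono (\<lambda>t. lr hq hu t g)) \<and>
     (\<forall>t. strict_mono (\<lambda>g. lr hq hu t g)) \<and>
     (\<forall>t. (INF g. lr hq hu t g) = 0 \<and> \<not> bdd_above (range (\<lambda>g. lr hq hu t g)))"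

end

theory Submission
  imports Defs
begin

lemma fracl: fixes x y d1 d2 :: real shows "0 < d1 \<Longrightarrow> 0 < d2 \<Longrightarrow> x * d2 < y * d1 \<Longrightarrow> x / d1 < y / d2"
  by (simp add: field_simps)

locale mlr =
  fixes f g :: "real \<Rightarrow> real"
  assumes fpos: "\<And>x. 0 < f x" and gpos: "\<And>x. 0 < g x"
    and intf: "integrable lborel f" and intg: "integrable lborel g"
    and Lcont: "continuous_on UNIV (\<lambda>x. f x / g x)"
    and Lmono: "strict_mono (\<lambda>x. f x / g x)"
    and Linf: "(INF x. f x / g x) = 0"
    and Lunb: "\<not> bdd_above (range (\<lambda>x. f x / g x))"
begin

definition L where "L x = f x / g x"
definition J :: "(real \<Rightarrow> real) \<Rightarrow> real \<Rightarrow> real" where "J h T = (LINT x:{x. T < L x}|lborel. h x)"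

lemma L_pos: "0 < L x" using fpos gpos by (simp add: L_def)

lemma L_isCont: "isCont L x"
  using Lcont unfolding L_def[abs_def] by (simp add: continuous_on_eq_continuous_at)

lemma L_mono: "x < y \<Longrightarrow> L x < L y"
  using Lmono unfolding L_def strict_mono_def by auto

lemma L_below: "0 < a \<Longrightarrow> \<exists>x. L x < a"
proof -
  assume a: "0 < a"
  have "bdd_below (range L)" using L_pos by (auto intro!: bdd_belowI[of _ 0] less_imp_le)
  moreover have "(INF x. L x) < a" using Linf a by (simp add: L_def[abs_def])
  ultimately show ?thesis by (simp add: cINF_less_iff)
qed

lemma L_above: "\<exists>x. a < L x"
  using Lunb unfolding L_def[abs_def] bdd_above_def by (auto simp: not_le)

lemma L_hit: "0 < a \<Longrightarrow> \<exists>x. L x = a"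
proof -
  assume a: "0 < a"
  obtain x1 where x1: "L x1 < a" using L_below a by blast
  obtain x2 where x2: "a < L x2" using L_above by blast
  have "x1 \<le> x2" using x1 x2 L_mono by (metis less_trans not_le order_less_imp_le)
  then show ?thesis using IVT[of L x1 a x2] x1 x2 L_isCont by auto
qed

lemma L_between: "0 \<le> a \<Longrightarrow> a < b \<Longrightarrow> \<exists>x. a < L x \<and> L x < b"
proof -
  assume "0 \<le> a" "a < b"
  then obtain x where "L x = (a+b)/2" using L_hit[of "(a+b)/2"] by auto
  then show ?thesis using \<open>a < b\<close> by (intro exI[of _ x]) auto
qed

lemma L_meas[measurable]: "L \<in> borel_measurable borel"
  using L_isCont by (intro borel_measurable_continuous_onI) (simp add: continuous_at_imp_continuous_on)

lemma sets_super[measurable]: "{x. T < L x} \<in> sets lborel"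
  by measurable

lemma open_super: "open {x. T < L x}"
  using L_isCont by (intro open_Collect_less) (auto simp: continuous_at_imp_continuous_on)

lemma sint: fixes A :: "real set" and h :: "real \<Rightarrow> real" shows "A \<in> sets lborel \<Longrightarrow> integrable lborel h \<Longrightarrow> set_integrable lborel A h"
  unfolding set_integrable_def using integrable_mult_indicator[of A lborel h] by simp

lemma pos_int:
  fixes A U :: "real set" and h :: "real \<Rightarrow> real"
  assumes A: "A \<in> sets lborel" and h: "integrable lborel h" and hp: "\<forall>x\<in>A. 0 < h x"
    and U: "open U" "U \<noteq> {}" "U \<subseteq> A"
  shows "0 < (LINT x:A|lborel. h x)"
proof -
  obtain x0 where x0: "x0 \<in> U" using U by auto
  then obtain e where e: "e > 0" "ball x0 e \<subseteq> U" using U open_contains_ball by blast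
  have sub: "{x0-e<..<x0+e} \<subseteq> A" using e U(3) by (auto simp: dist_real_def subset_iff)
  have int: "integrable lborel (\<lambda>x. indicator A x *\<^sub>R h x)"
    using A h by (rule integrable_mult_indicator)
  have nn: "AE x in lborel. 0 \<le> indicator A x *\<^sub>R h x"
    using hp by (auto simp: indicator_def less_imp_le)
  have ge: "0 \<le> (LINT x:A|lborel. h x)"
    unfolding set_lebesgue_integral_def using nn by (intro integral_nonneg_AE) auto
  moreover have "(LINT x:A|lborel. h x) \<noteq> 0"
  proof
    assume "(LINT x:A|lborel. h x) = 0"
    then have "AE x in lborel. indicator A x *\<^sub>R h x = 0"
      using integral_nonneg_eq_0_iff_AE[OF int nn] unfolding set_lebesgue_integral_def by simp
    then have "AE x in lborel. x \<notin> {x0-e<..<x0+e}"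
      by eventually_elim (use sub hp in \<open>auto simp: indicator_def subset_iff split: if_splits; metis less_irrefl\<close>)
    then have "emeasure lborel {x0-e<..<x0+e} = 0"
      by (subst (asm) AE_iff_measurable[of "{x0-e<..<x0+e}"]) auto
    then show False using e by simp
  qed
  ultimately show ?thesis by simp
qed

lemma J_pos: assumes "integrable lborel h" "\<And>x. 0 < h x" shows "0 < J h T"
proof -
  obtain x where "T < L x" using L_above by blast
  then show ?thesis unfolding J_def using assms open_super
    by (intro pos_int[where U="{x. T < L x}"]) auto
qed

lemma D_sets[measurable]: "{x. T < L x \<and> L x \<le> T'} \<in> sets lborel" by measurable

lemma J_split: fixes h :: "real \<Rightarrow> real" assumes "T < T'" "integrable lborel h"
  shows "J h T = (LINT x:{x. T < L x \<and> L x \<le> T'}|lborel. h x) + J h T'"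
proof -
  have "{x. T < L x} = {x. T < L x \<and> L x \<le> T'} \<union> {x. T' < L x}" using assms by auto
  then show ?thesis unfolding J_def using assms
    by (simp only:) (rule set_integral_Un, auto intro!: sint)
qed

lemma D_pos: fixes h :: "real \<Rightarrow> real" assumes "0 \<le> T" "T < T'" "integrable lborel h" "\<And>x. 0 < h x"
  shows "0 < (LINT x:{x. T < L x \<and> L x \<le> T'}|lborel. h x)"
proof -
  obtain x where "T < L x \<and> L x < T'" using L_between assms by blast
  moreover have "open {x. T < L x \<and> L x < T'}"
    using L_isCont by (intro open_Collect_conj open_Collect_less) (auto simp: continuous_at_imp_continuous_on)
  ultimately show ?thesis using assms
    by (intro pos_int[where U="{x. T < L x \<and> L x < T'}"]) auto
qed

lemma J_dec: assumes "0 \<le> T" "T < T'" "integrable lborel h" "\<And>x. 0 < h x"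
  shows "J h T' < J h T"
  using J_split[OF assms(2,3)] D_pos[OF assms] by simp

lemma fB: "T * J g T < J f T"
proof -
  have si: "set_integrable lborel {x. T < L x} (\<lambda>x. f x - T * g x)"
    using intf intg by (intro sint) auto
  obtain x where "T < L x" using L_above by blast
  then have "0 < (LINT x:{x. T < L x}|lborel. f x - T * g x)"
    using intf intg open_super gpos
    by (intro pos_int[where U="{x. T < L x}"]) (auto simp: L_def field_simps)
  also have "\<dots> = J f T - T * J g T"
    unfolding J_def using intf intg
    by (subst set_integral_diff(2)) (auto intro!: sint)
  finally show ?thesis by simp
qed

lemma fD: "(LINT x:{x. T < L x \<and> L x \<le> T'}|lborel. f x) \<le> T' * (LINT x:{x. T < L x \<and> L x \<le> T'}|lborel. g x)"
proof -
  have "(LINT x:{x. T < L x \<and> L x \<le> T'}|lborel. f x) \<le> (LINT x:{x. T < L x \<and> L x \<le> T'}|lborel. T' * g x)"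
    using intf intg gpos
    by (intro set_integral_mono sint) (auto simp: L_def field_simps)
  then show ?thesis by simp
qed

lemma ratio: assumes "0 \<le> T" "T < T'"
  shows "J g T' * J f T < J g T * J f T'"
proof -
  define fD where "fD = (LINT x:{x. T < L x \<and> L x \<le> T'}|lborel. f x)"
  define gD where "gD = (LINT x:{x. T < L x \<and> L x \<le> T'}|lborel. g x)"
  have e1: "J f T = fD + J f T'" using J_split[OF assms(2) intf] fD_def by simp
  have e2: "J g T = gD + J g T'" using J_split[OF assms(2) intg] gD_def by simp
  have p1: "0 < gD" unfolding gD_def using D_pos[OF assms intg gpos] .
  have p2: "0 < J g T'" using J_pos[OF intg gpos] .
  have b1: "fD \<le> T' * gD" unfolding fD_def gD_def by (rule fD)
  have b2: "T' * J g T' < J f T'" by (rule fB)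
  have "J g T' * fD \<le> J g T' * (T' * gD)" using b1 p2 by (intro mult_left_mono) auto
  also have "\<dots> = (T' * J g T') * gD" by simp
  also have "\<dots> < J f T' * gD" using b2 p1 by (intro mult_strict_right_mono) auto
  finally have "J g T' * fD < J f T' * gD" .
  then show ?thesis unfolding e1 e2 by (simp add: algebra_simps)
qed

lemma J_cont: fixes h :: "real \<Rightarrow> real" assumes h: "integrable lborel h"
  shows "isCont (J h) T0"
proof -
  obtain a where a: "\<And>x. L x = T0 \<Longrightarrow> x = a"
  proof (cases "\<exists>a. L a = T0")
    case True
    then obtain a where "L a = T0" by blast
    then show ?thesis using that L_mono by (metis linorder_neqE_linordered_idom order_less_irrefl)
  next
    case False then show ?thesis using that by blast
  qed
  have "(\<lambda>X. J h X) \<midarrow>T0\<rightarrow> J h T0"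
    unfolding tendsto_at_iff_sequentially comp_def
  proof (intro allI impI)
    fix X :: "nat \<Rightarrow> real" assume X: "X \<longlonglongrightarrow> T0"
    show "(\<lambda>i. J h (X i)) \<longlonglongrightarrow> J h T0"
      unfolding J_def set_lebesgue_integral_def
    proof (rule integral_dominated_convergence[where w="\<lambda>x. norm (h x)"])
      show "integrable lborel (\<lambda>x. norm (h x))" using h by simp
      show "(\<lambda>x. indicator {x. T0 < L x} x *\<^sub>R h x) \<in> borel_measurable lborel"
        using h by measurable
      show "\<And>i. (\<lambda>x. indicator {x. X i < L x} x *\<^sub>R h x) \<in> borel_measurable lborel"
        using h by measurable
      show "\<And>i. AE x in lborel. norm (indicator {x. X i < L x} x *\<^sub>R h x) \<le> norm (h x)"
        by (auto simp: indicator_def)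
      show "AE x in lborel. (\<lambda>i. indicator {x. X i < L x} x *\<^sub>R h x) \<longlonglongrightarrow> indicator {x. T0 < L x} x *\<^sub>R h x"
        using AE_lborel_singleton[of a]
      proof eventually_elim
        case (elim x)
        then have ne: "L x \<noteq> T0" using a by blast
        show ?case
        proof (cases "T0 < L x")
          case True
          have "eventually (\<lambda>i. X i < L x) sequentially" using order_tendstoD(2)[OF X True] by simp
          then have "eventually (\<lambda>i. indicator {x. X i < L x} x *\<^sub>R h x = indicator {x. T0 < L x} x *\<^sub>R h x) sequentially"
            by eventually_elim (use True in auto)
          then show ?thesis by (rule tendsto_eventually)
        next
          case False
          then have lt: "L x < T0" using ne by auto
          have "eventually (\<lambda>i. L x < X i) sequentially" using order_tendstoD(1)[OF X lt] by simp
          then have "eventually (\<lambda>i. indicator {x. X i < L x} x *\<^sub>R h x = indicator {x. T0 < L x} x *\<^sub>R h x) sequentially"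
            by eventually_elim (use lt in auto)
          then show ?thesis by (rule tendsto_eventually)
        qed
      qed
    qed
  qed
  then show ?thesis by (simp add: isCont_def)
qed

lemma J_lim0: fixes h :: "real \<Rightarrow> real" assumes h: "integrable lborel h"
  shows "(\<lambda>n. J h (1 / Suc n)) \<longlonglongrightarrow> integral\<^sup>L lborel h"
  unfolding J_def set_lebesgue_integral_def
proof (rule integral_dominated_convergence[where w="\<lambda>x. norm (h x)"])
  show "integrable lborel (\<lambda>x. norm (h x))" using h by simp
  show "h \<in> borel_measurable lborel" using h by measurable
  show "\<And>i. (\<lambda>x. indicator {x. 1 / Suc i < L x} x *\<^sub>R h x) \<in> borel_measurable lborel"
    using h by measurable
  show "\<And>i. AE x in lborel. norm (indicator {x. 1 / Suc i < L x} x *\<^sub>R h x) \<le> norm (h x)"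
    by (auto simp: indicator_def)
  show "AE x in lborel. (\<lambda>i. indicator {x. 1 / Suc i < L x} x *\<^sub>R h x) \<longlonglongrightarrow> h x"
  proof (intro AE_I2)
    fix x
    have "(\<lambda>n. 1 / real (Suc n)) \<longlonglongrightarrow> 0" by (rule LIMSEQ_inverse_real_of_nat[unfolded inverse_eq_divide])
    then have "eventually (\<lambda>i. 1 / real (Suc i) < L x) sequentially" using L_pos by (rule order_tendstoD)
    then have "eventually (\<lambda>i. indicator {x. 1 / Suc i < L x} x *\<^sub>R h x = h x) sequentially"
      by eventually_elim auto
    then show "(\<lambda>i. indicator {x. 1 / Suc i < L x} x *\<^sub>R h x) \<longlonglongrightarrow> h x" by (rule tendsto_eventually)
  qed
qed

lemma J_liminf: fixes h :: "real \<Rightarrow> real" assumes h: "integrable lborel h"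
  shows "(\<lambda>n. J h (Suc n)) \<longlonglongrightarrow> 0"
proof -
  have "(\<lambda>n. J h (Suc n)) \<longlonglongrightarrow> integral\<^sup>L lborel (\<lambda>x::real. 0::real)"
  unfolding J_def set_lebesgue_integral_def
  proof (rule integral_dominated_convergence[where w="\<lambda>x. norm (h x)" and f="\<lambda>x. 0::real"])
    show "integrable lborel (\<lambda>x. norm (h x))" using h by simp
    show "(\<lambda>x. 0::real) \<in> borel_measurable lborel" by simp
    show "\<And>i. (\<lambda>x. indicator {x. real (Suc i) < L x} x *\<^sub>R h x) \<in> borel_measurable lborel"
      using h by measurable
    show "\<And>i. AE x in lborel. norm (indicator {x. real (Suc i) < L x} x *\<^sub>R h x) \<le> norm (h x)"
      by (auto simp: indicator_def)
    show "AE x in lborel. (\<lambda>i. indicator {x. real (Suc i) < L x} x *\<^sub>R h x) \<longlonglongrightarrow> 0"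
    proof (intro AE_I2)
      fix x
      obtain N :: nat where N: "L x < N" using reals_Archimedean2 by blast
      have "eventually (\<lambda>i. indicator {x. real (Suc i) < L x} x *\<^sub>R h x = 0) sequentially"
        unfolding eventually_sequentially
        by (rule exI[of _ N]) (use N in \<open>auto simp: indicator_def\<close>)
      then show "(\<lambda>i. indicator {x. real (Suc i) < L x} x *\<^sub>R h x) \<longlonglongrightarrow> 0" by (rule tendsto_eventually)
    qed
  qed
  then show ?thesis by simp
qed

definition a1 :: "real \<Rightarrow> real \<Rightarrow> real" where
  "a1 p T = p * J f T / (p * J f T + (1 - p) * J g T)"
definition a2 :: "real \<Rightarrow> real \<Rightarrow> real" where
  "a2 p T = (p * J f T + (1 - p) * J g T) / (p * integral\<^sup>L lborel f + (1 - p) * integral\<^sup>L lborel g)"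

lemma Jf_pos: "0 < J f T" using J_pos[OF intf fpos] .
lemma Jg_pos: "0 < J g T" using J_pos[OF intg gpos] .

lemma intf_pos: "0 < integral\<^sup>L lborel f"
proof -
  have "integral\<^sup>L lborel f = J f (-1)" unfolding J_def set_lebesgue_integral_def
    using L_pos by (intro Bochner_Integration.integral_cong) (auto simp: indicator_def less_trans[of "-1" 0])
  then show ?thesis using Jf_pos by simp
qed
lemma intg_pos: "0 < integral\<^sup>L lborel g"
proof -
  have "integral\<^sup>L lborel g = J g (-1)" unfolding J_def set_lebesgue_integral_def
    using L_pos by (intro Bochner_Integration.integral_cong) (auto simp: indicator_def less_trans[of "-1" 0])
  then show ?thesis using Jg_pos by simp
qed

lemma a1_mono: assumes p: "0 < p" "p < 1" and T: "0 \<le> T" "T < T'" shows "a1 p T < a1 p T'"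
proof -
  have r: "J g T' * J f T < J g T * J f T'" by (rule ratio[OF T])
  define a where "a = J f T" define b where "b = J g T"
  define a' where "a' = J f T'" define b' where "b' = J g T'"
  have pos: "0 < a" "0 < b" "0 < a'" "0 < b'" using Jf_pos Jg_pos by (auto simp: a_def b_def a'_def b'_def)
  have r': "b' * a < b * a'" using r by (simp add: a_def b_def a'_def b'_def)
  have "p * (1 - p) * (a * b') < p * (1 - p) * (a' * b)"
    using r' p by (intro mult_strict_left_mono) (auto simp: mult.commute)
  then have "p * a * (p * a' + (1 - p) * b') < p * a' * (p * a + (1 - p) * b)"
    by (simp add: algebra_simps)
  then have "p * a / (p * a + (1 - p) * b) < p * a' / (p * a' + (1 - p) * b')"
  proof (rule fracl[rotated 2])
    show "0 < p * a + (1 - p) * b" "0 < p * a' + (1 - p) * b'" using pos p by (auto intro!: add_pos_pos)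
  qed
  then show ?thesis by (simp add: a1_def a_def b_def a'_def b'_def)
qed

lemma den_pos: assumes "0 < p" "p < 1" shows "0 < p * integral\<^sup>L lborel f + (1 - p) * integral\<^sup>L lborel g"
  using assms intf_pos intg_pos by (intro add_pos_pos mult_pos_pos) auto

lemma a2_mono: assumes p: "0 < p" "p < 1" and T: "0 \<le> T" "T < T'" shows "a2 p T' < a2 p T"
proof -
  have "J f T' < J f T" by (rule J_dec[OF T intf fpos])
  moreover have "J g T' < J g T" by (rule J_dec[OF T intg gpos])
  ultimately have "p * J f T' + (1 - p) * J g T' < p * J f T + (1 - p) * J g T"
    using p by (intro add_strict_mono mult_strict_left_mono) auto
  then show ?thesis unfolding a2_def using den_pos[OF p] by (rule divide_strict_right_mono)
qed

lemma a1_cont: assumes "0 < p" "p < 1" shows "isCont (a1 p) T"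
proof -
  have "0 < p * J f T + (1 - p) * J g T" using assms Jf_pos Jg_pos by (intro add_pos_pos mult_pos_pos) auto
  then show ?thesis unfolding a1_def[abs_def] using J_cont[OF intf] J_cont[OF intg]
    by (intro continuous_intros) auto
qed

lemma a2_cont: assumes "0 < p" "p < 1" shows "isCont (a2 p) T"
  unfolding a2_def[abs_def] using J_cont[OF intf] J_cont[OF intg] den_pos[OF assms]
  by (intro continuous_intros) auto

lemma a1_low: assumes p: "0 < p" "p < 1" and that: "0 \<le> T" shows "p * T / (p * T + (1 - p)) < a1 p T"
proof -
  have b: "T * J g T < J f T" by (rule fB)
  define a where "a = J f T" define b where "b = J g T"
  have pos: "0 < a" "0 < b" using Jf_pos Jg_pos by (auto simp: a_def b_def)
  have "p * (1 - p) * (T * b) < p * (1 - p) * a" using b p by (intro mult_strict_left_mono) (auto simp: a_def b_def)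
  then have "p * T * (p * a + (1 - p) * b) < p * a * (p * T + (1 - p))"
    by (simp add: algebra_simps)
  then have "p * T / (p * T + (1 - p)) < p * a / (p * a + (1 - p) * b)"
  proof (rule fracl[rotated 2])
    show "0 < p * T + (1 - p)" "0 < p * a + (1 - p) * b" using pos p that by (auto intro!: add_pos_pos add_nonneg_pos)
  qed
  then show ?thesis by (simp add: a1_def a_def b_def)
qed

lemma a1_lim0: assumes "0 < p" "p < 1"
  shows "(\<lambda>n. a1 p (1 / Suc n)) \<longlonglongrightarrow> p * integral\<^sup>L lborel f / (p * integral\<^sup>L lborel f + (1 - p) * integral\<^sup>L lborel g)"
  unfolding a1_def using J_lim0[OF intf] J_lim0[OF intg] den_pos[OF assms]
  by (intro tendsto_intros) auto

lemma a2_lim0: assumes "0 < p" "p < 1"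
  shows "(\<lambda>n. a2 p (1 / Suc n)) \<longlonglongrightarrow> 1"
proof -
  have "(\<lambda>n. a2 p (1 / Suc n)) \<longlonglongrightarrow> (p * integral\<^sup>L lborel f + (1 - p) * integral\<^sup>L lborel g) / (p * integral\<^sup>L lborel f + (1 - p) * integral\<^sup>L lborel g)"
    unfolding a2_def using J_lim0[OF intf] J_lim0[OF intg] den_pos[OF assms]
    by (intro tendsto_intros) auto
  then show ?thesis using den_pos[OF assms] by simp
qed

lemma a2_liminf: assumes "0 < p" "p < 1"
  shows "(\<lambda>n. a2 p (Suc n)) \<longlonglongrightarrow> 0"
proof -
  have "(\<lambda>n. a2 p (Suc n)) \<longlonglongrightarrow> (p * 0 + (1 - p) * 0) / (p * integral\<^sup>L lborel f + (1 - p) * integral\<^sup>L lborel g)"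
    unfolding a2_def using J_liminf[OF intf] J_liminf[OF intg] den_pos[OF assms]
    by (intro tendsto_intros) auto
  then show ?thesis by simp
qed

lemma E1: assumes p: "0 < p" "p < 1"
  and phi: "p * integral\<^sup>L lborel f / (p * integral\<^sup>L lborel f + (1 - p) * integral\<^sup>L lborel g) < \<beta>"
  and Tc: "0 < Tc" "\<beta> < a1 p Tc"
  shows "\<exists>T>0. a1 p T = \<beta>"
proof -
  have "eventually (\<lambda>n. a1 p (1 / Suc n) < \<beta>) sequentially"
    using order_tendstoD(2)[OF a1_lim0[OF p] phi] .
  then obtain n where n: "a1 p (1 / Suc n) < \<beta>" by (auto simp: eventually_sequentially)
  define t0 where "t0 = 1 / real (Suc n)"
  have t0: "0 < t0" by (simp add: t0_def)
  have lt: "t0 < Tc"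
  proof (rule ccontr)
    assume "\<not> t0 < Tc"
    then have "a1 p Tc \<le> a1 p t0" using a1_mono[OF p, of Tc t0] Tc by (cases "Tc = t0") auto
    then show False using n Tc unfolding t0_def by simp
  qed
  have "\<exists>x\<ge>t0. x \<le> Tc \<and> a1 p x = \<beta>"
    using n Tc lt a1_cont[OF p] unfolding t0_def[symmetric] by (intro IVT) auto
  then obtain x where "t0 \<le> x" "a1 p x = \<beta>" by blast
  then show ?thesis using t0 by (intro exI[of _ x]) auto
qed

lemma E2: assumes p: "0 < p" "p < 1" and b: "0 < \<beta>" "\<beta> < 1"
  shows "\<exists>T>0. a2 p T = \<beta>"
proof -
  have "eventually (\<lambda>n. \<beta> < a2 p (1 / Suc n)) sequentially"
    using order_tendstoD(1)[OF a2_lim0[OF p] b(2)] .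
  then obtain n where n: "\<beta> < a2 p (1 / Suc n)" by (auto simp: eventually_sequentially)
  have "eventually (\<lambda>n. a2 p (Suc n) < \<beta>) sequentially"
    using order_tendstoD(2)[OF a2_liminf[OF p] b(1)] .
  then obtain m where m: "a2 p (Suc m) < \<beta>" by (auto simp: eventually_sequentially)
  define t0 where "t0 = 1 / real (Suc n)"
  have t0: "0 < t0" "t0 \<le> real (Suc m)" by (auto simp: t0_def field_simps)
  have "\<exists>x\<ge>t0. x \<le> real (Suc m) \<and> a2 p x = \<beta>"
    using n m t0 a2_cont[OF p] unfolding t0_def[symmetric] by (intro IVT2) auto
  then obtain x where "t0 \<le> x" "a2 p x = \<beta>" by blast
  then show ?thesis using t0 by (intro exI[of _ x]) auto
qed

lemma E3: assumes p: "0 < p" "p < 1" and T: "0 < T1" "0 < T2" "a1 p T1 = \<beta>" "a2 p T2 = \<beta>" "T1 \<noteq> T2"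
  shows "\<exists>T. min T1 T2 < T \<and> T < max T1 T2 \<and> a1 p T = a2 p T"
proof -
  define d where "d T = a1 p T - a2 p T" for T
  have dc: "isCont d x" for x unfolding d_def[abs_def] using a1_cont[OF p] a2_cont[OF p]
    by (intro continuous_intros) auto
  have lo: "d (min T1 T2) < 0" and hi: "0 < d (max T1 T2)"
  proof -
    consider "T1 < T2" | "T2 < T1" using T(5) by linarith
    then have "d (min T1 T2) < 0 \<and> 0 < d (max T1 T2)"
    proof cases
      case 1
      then have "a2 p T2 < a2 p T1" "a1 p T1 < a1 p T2" using a2_mono[OF p, of T1 T2] a1_mono[OF p, of T1 T2] T by auto
      then show ?thesis using 1 T unfolding d_def by auto
    next
      case 2
      then have "a2 p T1 < a2 p T2" "a1 p T2 < a1 p T1" using a2_mono[OF p, of T2 T1] a1_mono[OF p, of T2 T1] T by auto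
      then show ?thesis using 2 T unfolding d_def by auto
    qed
    then show "d (min T1 T2) < 0" "0 < d (max T1 T2)" by auto
  qed
  have "\<exists>x\<ge>min T1 T2. x \<le> max T1 T2 \<and> d x = 0"
    using lo hi dc by (intro IVT) auto
  then obtain x where x: "min T1 T2 \<le> x" "x \<le> max T1 T2" "d x = 0" by blast
  then have "x \<noteq> min T1 T2" "x \<noteq> max T1 T2" using lo hi by auto
  then show ?thesis using x unfolding d_def by (intro exI[of _ x]) auto
qed

lemma a1_inj: assumes "0 < p" "p < 1" "0 \<le> T" "0 \<le> T'" "a1 p T = a1 p T'" shows "T = T'"
  using a1_mono[OF assms(1,2), of T T'] a1_mono[OF assms(1,2), of T' T] assms(3-5)
  by (cases T T' rule: linorder_cases) auto

lemma a2_inj: assumes "0 < p" "p < 1" "0 \<le> T" "0 \<le> T'" "a2 p T = a2 p T'" shows "T = T'"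
  using a2_mono[OF assms(1,2), of T T'] a2_mono[OF assms(1,2), of T' T] assms(3-5)
  by (cases T T' rule: linorder_cases) auto

lemma d_inj: assumes "0 < p" "p < 1" "0 \<le> T" "0 \<le> T'" "a1 p T = a2 p T" "a1 p T' = a2 p T'" shows "T = T'"
  using a1_mono[OF assms(1,2), of T T'] a1_mono[OF assms(1,2), of T' T]
    a2_mono[OF assms(1,2), of T T'] a2_mono[OF assms(1,2), of T' T] assms(3-6)
  by (cases T T' rule: linorder_cases) auto

end

lemma thr_pos: assumes "0 < p" "p < 1" "-xu < t" "t < xq" shows "0 < thr p xq xu t"
  using assms unfolding thr_def by (intro divide_pos_pos mult_pos_pos) auto

lemma thr_mono: assumes p: "0 < p" "p < 1" and t: "-xu < t" "t < xq" "-xu < t'" "t' < xq" "t < t'"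
  shows "thr p xq xu t < thr p xq xu t'"
proof -
  have e: "(xu + t) * (xq - t') - (xu + t') * (xq - t) = (t - t') * (xq + xu)" by (simp add: algebra_simps)
  have "(t - t') * (xq + xu) < 0" using t by (intro mult_neg_pos) auto
  then have "(xu + t) * (xq - t') < (xu + t') * (xq - t)" using e by linarith
  then have "(p * (1 - p)) * ((xu + t) * (xq - t')) < (p * (1 - p)) * ((xu + t') * (xq - t))"
    using p by (intro mult_strict_left_mono) auto
  then have "((1 - p) * (xu + t)) * (p * (xq - t')) < ((1 - p) * (xu + t')) * (p * (xq - t))"
    by (simp add: algebra_simps)
  then show ?thesis unfolding thr_def
  proof (rule fracl[rotated 2])
    show "0 < p * (xq - t)" "0 < p * (xq - t')" using p t by auto
  qed
qed

lemma thr_inv: assumes p: "0 < p" "p < 1" and x: "0 < xq" "0 < xu" and T: "0 < T"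
  shows "\<exists>t. -xu < t \<and> t < xq \<and> thr p xq xu t = T"
proof -
  define D where "D = p * T + (1 - p)"
  have D: "0 < D" using p T by (simp add: D_def add_pos_pos)
  define t where "t = (p * T * xq - (1 - p) * xu) / D"
  have a: "xu + t = p * T * (xq + xu) / D" using D by (simp add: t_def D_def field_simps)
  have b: "xq - t = (1 - p) * (xq + xu) / D" using D by (simp add: t_def D_def field_simps)
  have "0 < xu + t" unfolding a using p T x D by (intro divide_pos_pos mult_pos_pos) auto
  moreover have "0 < xq - t" unfolding b using p T x D by (intro divide_pos_pos mult_pos_pos) auto
  moreover have "thr p xq xu t = T"
  proof -
    have num: "(1 - p) * (p * T * (xq + xu) / D) = T * (p * ((1 - p) * (xq + xu) / D))" by simp
    have "p * ((1 - p) * (xq + xu) / D) \<noteq> 0" using p x D by auto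
    then show ?thesis unfolding thr_def a b num by simp
  qed
  ultimately show ?thesis by (intro exI[of _ t]) auto
qed

lemma thr_c: assumes p: "0 < p" "p < 1" and c: "-xu < c" "c < xq"
  shows "p * thr p xq xu c / (p * thr p xq xu c + (1 - p)) = beta xq xu c"
proof -
  define k where "k = xq - c"
  have k: "0 < k" using c by (simp add: k_def)
  have e1: "p * thr p xq xu c = (1 - p) * (xu + c) / k"
  proof -
    have "p \<noteq> 0" "xq - c \<noteq> 0" using p c by auto
    then show ?thesis unfolding thr_def k_def by (simp add: field_simps)
  qed
  have e2: "(1 - p) * (xu + c) / k + (1 - p) = (1 - p) * (xq + xu) / k"
    using k by (simp add: field_simps k_def)
  have "(1 - p) * (xu + c) / k / ((1 - p) * (xq + xu) / k) = (xu + c) / (xq + xu)"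
  proof -
    have "1 - p \<noteq> 0" "xq + xu \<noteq> 0" "k \<noteq> 0" using p c k by auto
    then show ?thesis by simp
  qed
  then show ?thesis unfolding e1 e2 beta_def .
qed

lemma thr_inj: assumes p: "0 < p" "p < 1" and t: "-xu < t" "t < xq" "-xu < t'" "t' < xq"
  and e: "thr p xq xu t = thr p xq xu t'" shows "t = t'"
  using thr_mono[OF p t] thr_mono[OF p t(3,4,1,2)] e by (cases t t' rule: linorder_cases) auto

lemma thr_refl: assumes p: "0 < p" "p < 1" and t: "-xu < t" "t < xq" "-xu < t'" "t' < xq"
  and e: "thr p xq xu t < thr p xq xu t'" shows "t < t'"
  using thr_mono[OF p t(3,4,1,2)] e by (cases t t' rule: linorder_cases) auto

theorem mainTheorem11:
  fixes p xq xu c \<theta> :: real and hq hu :: "real \<Rightarrow> real \<Rightarrow> real"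
  assumes "model p hq hu xq xu"
    and "-xu < c" and "c < xq"
    and "phi p hq hu \<theta> < beta xq xu c"
  shows "(tau_d1 p hq hu xq xu c \<theta> < tau_d2 p hq hu xq xu c \<theta> \<longrightarrow>
            tau_star p hq hu xq xu \<theta> \<in> {tau_d1 p hq hu xq xu c \<theta> <..< tau_d2 p hq hu xq xu c \<theta>})
       \<and> (tau_d2 p hq hu xq xu c \<theta> < tau_d1 p hq hu xq xu c \<theta> \<longrightarrow>
            tau_star p hq hu xq xu \<theta> \<in> {tau_d2 p hq hu xq xu c \<theta> <..< tau_d1 p hq hu xq xu c \<theta>})"
proof -
  note m = assms(1)[unfolded model_def]
  have p: "0 < p" "p < 1" and x: "0 < xq" "0 < xu" using m by auto
  have cont: "continuous_on UNIV (\<lambda>x. hq \<theta> x / hu \<theta> x)"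
  proof -
    have "continuous_on UNIV ((\<lambda>(t, g). lr hq hu t g) \<circ> (\<lambda>x. (\<theta>, x)))"
      using m by (intro continuous_on_compose continuous_intros) (auto elim: continuous_on_subset)
    then show ?thesis by (simp add: o_def lr_def)
  qed
  interpret M: mlr "hq \<theta>" "hu \<theta>"
    using m cont by unfold_locales (auto simp: lr_def[abs_def])
  define be where "be = beta xq xu c"
  have be: "0 < be" "be < 1" using assms(2,3) x by (auto simp: be_def beta_def field_simps)
  have hs1: "s1 p hq hu xq xu \<theta> t = M.a1 p (thr p xq xu t)" for t
    by (simp add: s1_def acc_set_def Let_def M.a1_def M.J_def M.L_def lr_def)
  have hs2: "s2 p hq hu xq xu \<theta> t = M.a2 p (thr p xq xu t)" for t
    by (simp add: s2_def acc_set_def Let_def M.a2_def M.J_def M.L_def lr_def)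
  have hphi: "phi p hq hu \<theta> = p * integral\<^sup>L lborel (hq \<theta>) / (p * integral\<^sup>L lborel (hq \<theta>) + (1 - p) * integral\<^sup>L lborel (hu \<theta>))"
    by (simp add: phi_def)
  define Tc where "Tc = thr p xq xu c"
  have Tc: "0 < Tc" unfolding Tc_def using thr_pos p assms(2,3) by auto
  have "be < M.a1 p Tc" using M.a1_low[OF p, of Tc] Tc thr_c[OF p assms(2,3)] by (simp add: be_def Tc_def)
  then obtain T1 where T1: "0 < T1" "M.a1 p T1 = be" using M.E1[OF p _ Tc(1)] assms(4) hphi be_def by metis
  obtain T2 where T2: "0 < T2" "M.a2 p T2 = be" using M.E2[OF p be] by blast
  obtain t1 where t1: "-xu < t1" "t1 < xq" "thr p xq xu t1 = T1" using thr_inv[OF p x T1(1)] by blast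
  obtain t2 where t2: "-xu < t2" "t2 < xq" "thr p xq xu t2 = T2" using thr_inv[OF p x T2(1)] by blast
  have d1: "tau_d1 p hq hu xq xu c \<theta> = t1"
    unfolding tau_d1_def be_def[symmetric]
  proof (rule the_equality)
    show "t1 \<in> {- xu<..<xq} \<and> s1 p hq hu xq xu \<theta> t1 = be" using t1 T1 hs1 by auto
    fix t assume "t \<in> {- xu<..<xq} \<and> s1 p hq hu xq xu \<theta> t = be"
    then have t: "-xu < t" "t < xq" "M.a1 p (thr p xq xu t) = M.a1 p (thr p xq xu t1)" using hs1 t1 T1 by auto
    then have "thr p xq xu t = thr p xq xu t1"
      using M.a1_inj[OF p] thr_pos[OF p] t1 by (meson less_imp_le)
    then show "t = t1" using thr_inj[OF p t(1,2) t1(1,2)] by blast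
  qed
  have d2: "tau_d2 p hq hu xq xu c \<theta> = t2"
    unfolding tau_d2_def be_def[symmetric]
  proof (rule the_equality)
    show "t2 \<in> {- xu<..<xq} \<and> s2 p hq hu xq xu \<theta> t2 = be" using t2 T2 hs2 by auto
    fix t assume "t \<in> {- xu<..<xq} \<and> s2 p hq hu xq xu \<theta> t = be"
    then have t: "-xu < t" "t < xq" "M.a2 p (thr p xq xu t) = M.a2 p (thr p xq xu t2)" using hs2 t2 T2 by auto
    then have "thr p xq xu t = thr p xq xu t2"
      using M.a2_inj[OF p] thr_pos[OF p] t2 by (meson less_imp_le)
    then show "t = t2" using thr_inj[OF p t(1,2) t2(1,2)] by blast
  qed
  have star: "tau_star p hq hu xq xu \<theta> \<in> {min t1 t2<..<max t1 t2}" if ne: "t1 \<noteq> t2"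
  proof -
    have "T1 \<noteq> T2" using ne t1 t2 thr_inj[OF p t1(1,2) t2(1,2)] by auto
    then obtain T where T: "min T1 T2 < T" "T < max T1 T2" "M.a1 p T = M.a2 p T"
      using M.E3[OF p T1(1) T2(1) T1(2) T2(2)] by blast
    have T0: "0 < T" using T T1 T2 by linarith
    obtain ts where ts: "-xu < ts" "ts < xq" "thr p xq xu ts = T" using thr_inv[OF p x T0] by blast
    have eq: "tau_star p hq hu xq xu \<theta> = ts"
      unfolding tau_star_def
    proof (rule the_equality)
      show "ts \<in> {- xu<..<xq} \<and> s1 p hq hu xq xu \<theta> ts = s2 p hq hu xq xu \<theta> ts" using ts T hs1 hs2 by auto
      fix t assume "t \<in> {- xu<..<xq} \<and> s1 p hq hu xq xu \<theta> t = s2 p hq hu xq xu \<theta> t"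
      then have t: "-xu < t" "t < xq" "M.a1 p (thr p xq xu t) = M.a2 p (thr p xq xu t)" using hs1 hs2 by auto
      then have "thr p xq xu t = thr p xq xu ts"
        using M.d_inj[OF p, of "thr p xq xu t" T] thr_pos[OF p t(1,2)] T0 T ts by auto
      then show "t = ts" using thr_inj[OF p t(1,2) ts(1,2)] by blast
    qed
    have "min t1 t2 < ts \<and> ts < max t1 t2"
    proof (cases "t1 < t2")
      case True
      then have "T1 < T2" using thr_mono[OF p t1(1,2) t2(1,2)] t1(3) t2(3) by simp
      then have "thr p xq xu t1 < thr p xq xu ts" "thr p xq xu ts < thr p xq xu t2" using T t1 t2 ts by auto
      then show ?thesis using thr_refl[OF p t1(1,2) ts(1,2)] thr_refl[OF p ts(1,2) t2(1,2)] True by auto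
    next
      case False
      then have tt: "t2 < t1" using ne by auto
      then have "T2 < T1" using thr_mono[OF p t2(1,2) t1(1,2)] t1(3) t2(3) by simp
      then have "thr p xq xu t2 < thr p xq xu ts" "thr p xq xu ts < thr p xq xu t1" using T t1 t2 ts by auto
      then show ?thesis using thr_refl[OF p t2(1,2) ts(1,2)] thr_refl[OF p ts(1,2) t1(1,2)] tt by auto
    qed
    then show ?thesis using eq by auto
  qed
  show ?thesis unfolding d1 d2 using star by (auto simp: min_def max_def)
qed

end
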